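(* Let $n$ be even and $F\colon\mathbb F_2^n\to\mathbb F_2^n$ a quadratic APN function with linearity $L(F)=2^{\frac{n+l}{2}}$ where $l>n/2$. Then $F$ has exactly one component function with amplitude $2^{\frac{n+l}{2}}$, and all other non-trivial components have amplitude at most $2^{\frac{2n-l}{2}}$. In particular, any quadratic APN function $F\colon\mathbb F_2^n\to\mathbb F_2^n$ ($n$ even) has at most one component function with amplitude larger than $2^{3n/4}$.
   Context: $\langle\cdot,\cdot\rangle$ is the standard dot product. $F$ is APN if for every $a\ne0$ and $c$, $F(x)+F(x+a)=c$ has at most 2 solutions; quadratic if each component $F_b(x)=\langle b,F(x)\rangle$ is a quadratic form plus an affine function; $F_0$ is the trivial component. $W_F(b,a)=\sum_x(-1)^{F_b(x)+\langle x,a\rangle}$; linearity $L(F)=\max_{a,\,b\ne0}|W_F(b,a)|$. For quadratic $F$ and fixed $b$ there is $k$ with $|W_F(b,a)|\in\{0,2^{(n+k)/2}\}$ for all $a$; $2^{(n+k)/2}$ is the amplitude of $F_b$. *)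

theory Defs
  imports Complex_Main "HOL-Library.Cardinality"
begin

text \<open>Vectors of F_2^n are modelled as functions from a finite index type 'n
  (with n = CARD('n)) to bool; addition is pointwise exclusive or.\<close>

type_synonym 'n vec2 = "'n \<Rightarrow> bool"

definition vzero :: "'n vec2" where
  "vzero = (\<lambda>_. False)"

definition vadd :: "'n vec2 \<Rightarrow> 'n vec2 \<Rightarrow> 'n vec2" where
  "vadd x y = (\<lambda>i. x i \<noteq> y i)"

definition dot :: "('n::finite) vec2 \<Rightarrow> 'n vec2 \<Rightarrow> bool" where
  "dot b x = odd (card {i. b i \<and> x i})"

definition component :: "(('n::finite) vec2 \<Rightarrow> ('m::finite) vec2) \<Rightarrow> 'm vec2 \<Rightarrow> 'n vec2 \<Rightarrow> bool" where
  "component F b x = dot b (F x)"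

definition quad_plus_affine :: "(('n::finite) vec2 \<Rightarrow> bool) \<Rightarrow> bool" where
  "quad_plus_affine f \<longleftrightarrow> (\<exists>(q::'n \<Rightarrow> 'n \<Rightarrow> bool) (l::'n vec2) (c::bool).
      \<forall>x. f x = ((odd (card {(i,j). q i j \<and> x i \<and> x j}) \<noteq> dot l x) \<noteq> c))"

definition quadratic :: "(('n::finite) vec2 \<Rightarrow> ('m::finite) vec2) \<Rightarrow> bool" where
  "quadratic F \<longleftrightarrow> (\<forall>b. quad_plus_affine (component F b))"

definition APN :: "(('n::finite) vec2 \<Rightarrow> 'n vec2) \<Rightarrow> bool" where
  "APN F \<longleftrightarrow> (\<forall>a c. a \<noteq> vzero \<longrightarrow> card {x. vadd (F x) (F (vadd x a)) = c} \<le> 2)"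

definition sgn2 :: "bool \<Rightarrow> int" where
  "sgn2 t = (if t then -1 else 1)"

definition walsh :: "(('n::finite) vec2 \<Rightarrow> ('m::finite) vec2) \<Rightarrow> 'm vec2 \<Rightarrow> 'n vec2 \<Rightarrow> int" where
  "walsh F b a = (\<Sum>x\<in>UNIV. sgn2 (component F b x \<noteq> dot x a))"

definition linearity :: "(('n::finite) vec2 \<Rightarrow> ('m::finite) vec2) \<Rightarrow> int" where
  "linearity F = Max {\<bar>walsh F b a\<bar> | a b. b \<noteq> vzero}"

text \<open>Amplitude of F_b: the common nonzero value of |W_F(b,a)|, i.e. its maximum over a.\<close>
definition amplitude :: "(('n::finite) vec2 \<Rightarrow> ('m::finite) vec2) \<Rightarrow> 'm vec2 \<Rightarrow> int" where
  "amplitude F b = Max {\<bar>walsh F b a\<bar> | a. True}"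

end

theory Submission
  imports Defs
begin


lemma vadd_assoc: "vadd (vadd x y) z = vadd x (vadd y z)" by (auto simp: vadd_def)
lemma vadd_comm: "vadd x y = vadd y x" by (auto simp: vadd_def)
lemma vadd_self[simp]: "vadd x x = vzero" by (auto simp: vadd_def vzero_def)
lemma vadd_zero[simp]: "vadd x vzero = x" "vadd vzero x = x" by (auto simp: vadd_def vzero_def)
lemma vadd_cancel[simp]: "vadd x (vadd x y) = y" "vadd (vadd y x) x = y" by (auto simp: vadd_def)
lemma vadd_eq_zero: "vadd x y = vzero \<longleftrightarrow> x = y" by (auto simp: vadd_def vzero_def fun_eq_iff)

lemma card_vec: "CARD(('n::finite) vec2) = 2 ^ CARD('n)"
  by (simp add: card_fun)

lemma par_xor:
  assumes "finite S"
  shows "(odd (card {s\<in>S. P s}) \<noteq> odd (card {s\<in>S. R s})) = odd (card {s\<in>S. P s \<noteq> R s})"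
proof -
  have 1: "card {s\<in>S. P s} = card {s\<in>S. P s \<and> R s} + card {s\<in>S. P s \<and> \<not> R s}"
    using assms by (subst card_Un_disjoint[symmetric]) (auto intro!: arg_cong[where f=card])
  have 2: "card {s\<in>S. R s} = card {s\<in>S. P s \<and> R s} + card {s\<in>S. R s \<and> \<not> P s}"
    using assms by (subst card_Un_disjoint[symmetric]) (auto intro!: arg_cong[where f=card])
  have 3: "card {s\<in>S. P s \<noteq> R s} = card {s\<in>S. P s \<and> \<not> R s} + card {s\<in>S. R s \<and> \<not> P s}"
    using assms by (subst card_Un_disjoint[symmetric]) (auto intro!: arg_cong[where f=card])
  show ?thesis unfolding 1 2 3 by presburger
qed

lemma par_xor_U:
  "(odd (card {s::'a::finite. P s}) \<noteq> odd (card {s. R s})) = odd (card {s. P s \<noteq> R s})"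
  using par_xor[of "UNIV::'a set" P R] by simp

lemma dot_vadd: "dot b (vadd x y) = (dot b x \<noteq> dot b y)"
proof -
  have "{i. b i \<and> vadd x y i} = {i. (b i \<and> x i) \<noteq> (b i \<and> y i)}" by (auto simp: vadd_def)
  then show ?thesis unfolding dot_def by (simp only: par_xor_U[symmetric])
qed

lemma dot_comm: "dot a b = dot b a" unfolding dot_def by (rule arg_cong[where f="\<lambda>S. odd (card S)"]) auto
lemma dot_zero[simp]: "dot vzero x = False" "dot x vzero = False" by (auto simp: dot_def vzero_def)
lemma dot_vadd1: "dot (vadd x y) b = (dot x b \<noteq> dot y b)" by (metis dot_comm dot_vadd)

lemma par8:
  fixes P1 P2 P3 P4 P5 P6 P7 P8 :: "'a::finite \<Rightarrow> bool"
  assumes "\<And>p. (P1 p \<noteq> P2 p) = (((P3 p \<noteq> P4 p) \<noteq> (P5 p \<noteq> P6 p)) \<noteq> (P7 p \<noteq> P8 p))"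
  shows "(odd (card {p. P1 p}) \<noteq> odd (card {p. P2 p})) =
    (((odd (card {p. P3 p}) \<noteq> odd (card {p. P4 p})) \<noteq> (odd (card {p. P5 p}) \<noteq> odd (card {p. P6 p})))
     \<noteq> (odd (card {p. P7 p}) \<noteq> odd (card {p. P8 p})))"
proof -
  have e: "odd (card {p. (P1 p \<noteq> P2 p) \<noteq> (((P3 p \<noteq> P4 p) \<noteq> (P5 p \<noteq> P6 p)) \<noteq> (P7 p \<noteq> P8 p))}) = False"
    using assms by simp
  have f: "odd (card {p. (P1 p \<noteq> P2 p) \<noteq> (((P3 p \<noteq> P4 p) \<noteq> (P5 p \<noteq> P6 p)) \<noteq> (P7 p \<noteq> P8 p))}) =
   ((odd (card {p. P1 p}) \<noteq> odd (card {p. P2 p})) \<noteq>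
    (((odd (card {p. P3 p}) \<noteq> odd (card {p. P4 p})) \<noteq> (odd (card {p. P5 p}) \<noteq> odd (card {p. P6 p})))
     \<noteq> (odd (card {p. P7 p}) \<noteq> odd (card {p. P8 p}))))"
    by (simp only: par_xor_U)
  show ?thesis using e f by blast
qed

definition qprop :: "('n::finite vec2 \<Rightarrow> bool) \<Rightarrow> bool" where
  "qprop f \<longleftrightarrow> (\<forall>x y u. (f (vadd x y) \<noteq> f (vadd (vadd x y) u)) =
     (((f x \<noteq> f (vadd x u)) \<noteq> (f y \<noteq> f (vadd y u))) \<noteq> (f vzero \<noteq> f u)))"

lemma quad_qprop:
  assumes "quad_plus_affine (f::'n::finite vec2 \<Rightarrow> bool)"
  shows "qprop f"
proof -
  obtain q l c where fq: "\<And>x. f x = ((odd (card {(i,j). q i j \<and> x i \<and> x j}) \<noteq> dot l x) \<noteq> c)"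
    using assms unfolding quad_plus_affine_def by blast
  define M where "M x p = (q (fst p) (snd p) \<and> x (fst p) \<and> x (snd p))" for x :: "'n vec2" and p :: "'n \<times> 'n"
  define Q where "Q x = odd (card {p. M x p})" for x
  have QQ: "odd (card {(i,j). q i j \<and> x i \<and> x j}) = Q x" for x
    unfolding Q_def M_def by (rule arg_cong[where f="\<lambda>S. odd (card S)"]) auto
  have L: "dot l (vadd x y) = (dot l x \<noteq> dot l y)" for x y by (rule dot_vadd)
  have Qx: "(Q (vadd x y) \<noteq> Q (vadd (vadd x y) u)) =
     (((Q x \<noteq> Q (vadd x u)) \<noteq> (Q y \<noteq> Q (vadd y u))) \<noteq> (Q vzero \<noteq> Q u))" for x y u
    unfolding Q_def by (rule par8) (simp only: M_def vadd_def vzero_def; argo)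
  show ?thesis unfolding qprop_def fq QQ
    apply (simp only: L vadd_assoc dot_zero)
    apply (intro allI)
    subgoal for x y u using Qx[of x y u] by (simp only: vadd_assoc) argo
    done
qed



lemma sgn2_xor: "sgn2 (a \<noteq> b) = sgn2 a * sgn2 b" by (auto simp: sgn2_def)
lemma sgn2_not: "sgn2 (\<not> a) = - sgn2 a" by (auto simp: sgn2_def)
lemma sgn2_False[simp]: "sgn2 False = 1" by (simp add: sgn2_def)
lemma sgn2_sq: "sgn2 a * sgn2 a = 1" by (simp add: sgn2_def)

lemma sum_shift: "(\<Sum>x\<in>UNIV. g (vadd x z)) = (\<Sum>x\<in>(UNIV::('n::finite) vec2 set). g x)"
  by (rule sum.reindex_bij_witness[where i="\<lambda>x. vadd x z" and j="\<lambda>x. vadd x z"]) auto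

lemma card_vec_int: "int (card (UNIV::('n::finite) vec2 set)) = 2 ^ CARD('n)"
  using card_vec[where 'n='n] by simp

lemma orth: "(\<Sum>a\<in>UNIV. sgn2 (dot (u::('n::finite) vec2) a)) = (if u = vzero then 2 ^ CARD('n) else 0)"
proof (cases "u = vzero")
  case True
  then show ?thesis using card_vec_int[where 'n='n] by simp
next
  case False
  then obtain i where ui: "u i" by (auto simp: vzero_def fun_eq_iff)
  define e :: "'n vec2" where "e = (\<lambda>j. j = i)"
  have "{j. u j \<and> e j} = {i}" using ui by (auto simp: e_def)
  then have de: "dot u e" by (simp add: dot_def)
  have "(\<Sum>a\<in>UNIV. sgn2 (dot u a)) = (\<Sum>a\<in>UNIV. sgn2 (dot u (vadd a e)))"
    by (rule sum_shift[symmetric])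
  also have "\<dots> = (\<Sum>a\<in>UNIV. - sgn2 (dot u a))"
    using de by (simp add: dot_vadd sgn2_not)
  also have "\<dots> = - (\<Sum>a\<in>UNIV. sgn2 (dot u a))" by (simp add: sum_negf)
  finally show ?thesis using False by simp
qed

definition wal :: "(('n::finite) vec2 \<Rightarrow> bool) \<Rightarrow> 'n vec2 \<Rightarrow> int" where
  "wal f a = (\<Sum>x\<in>UNIV. sgn2 (f x \<noteq> dot x a))"
definition TT :: "(('n::finite) vec2 \<Rightarrow> bool) \<Rightarrow> 'n vec2 \<Rightarrow> int" where
  "TT f u = (\<Sum>x\<in>UNIV. sgn2 (f x \<noteq> f (vadd x u)))"
definition rad :: "(('n::finite) vec2 \<Rightarrow> bool) \<Rightarrow> 'n vec2 set" where
  "rad f = {u. \<forall>x. (f x \<noteq> f (vadd x u)) = (f vzero \<noteq> f u)}"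

lemma W2: "(wal f a)^2 = (\<Sum>u\<in>UNIV. sgn2 (dot u a) * TT f u)"
proof -
  have "(wal f a)^2 = (\<Sum>x\<in>UNIV. \<Sum>y\<in>UNIV. sgn2 (f x \<noteq> dot x a) * sgn2 (f y \<noteq> dot y a))"
    unfolding wal_def power2_eq_square by (rule sum_product)
  also have "\<dots> = (\<Sum>x\<in>UNIV. \<Sum>u\<in>UNIV. sgn2 (f x \<noteq> dot x a) * sgn2 (f (vadd x u) \<noteq> dot (vadd x u) a))"
  proof (rule sum.cong[OF refl])
    fix x
    show "(\<Sum>y\<in>UNIV. sgn2 (f x \<noteq> dot x a) * sgn2 (f y \<noteq> dot y a)) =
       (\<Sum>u\<in>UNIV. sgn2 (f x \<noteq> dot x a) * sgn2 (f (vadd x u) \<noteq> dot (vadd x u) a))"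
      using sum_shift[where z=x and g="\<lambda>y. sgn2 (f x \<noteq> dot x a) * sgn2 (f y \<noteq> dot y a)"]
      by (simp add: vadd_comm)
  qed
  also have "\<dots> = (\<Sum>x\<in>UNIV. \<Sum>u\<in>UNIV. sgn2 (dot u a) * sgn2 (f x \<noteq> f (vadd x u)))"
    by (rule sum.cong[OF refl], rule sum.cong[OF refl]) (auto simp: dot_vadd1 sgn2_def)
  also have "\<dots> = (\<Sum>u\<in>UNIV. \<Sum>x\<in>UNIV. sgn2 (dot u a) * sgn2 (f x \<noteq> f (vadd x u)))"
    by (rule sum.swap)
  also have "\<dots> = (\<Sum>u\<in>UNIV. sgn2 (dot u a) * TT f u)"
    unfolding TT_def by (simp add: sum_distrib_left)
  finally show ?thesis .
qed

lemma TT_val: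
  fixes f :: "('n::finite) vec2 \<Rightarrow> bool"
  assumes q: "qprop f"
  shows "TT f u = (if u \<in> rad f then 2 ^ CARD('n) * sgn2 (f vzero \<noteq> f u) else 0)"
proof (cases "u \<in> rad f")
  case True
  then have "TT f u = (\<Sum>x\<in>(UNIV::'n vec2 set). sgn2 (f vzero \<noteq> f u))"
    unfolding TT_def rad_def by simp
  also have "\<dots> = int (card (UNIV::'n vec2 set)) * sgn2 (f vzero \<noteq> f u)"
    by simp
  also have "\<dots> = 2 ^ CARD('n) * sgn2 (f vzero \<noteq> f u)"
    by (simp only: card_vec_int)
  finally show ?thesis using True by simp
next
  case False
  then obtain z where z: "(f z \<noteq> f (vadd z u)) \<noteq> (f vzero \<noteq> f u)"
    unfolding rad_def by blast
  have g: "(f (vadd x z) \<noteq> f (vadd (vadd x z) u)) = (\<not> (f x \<noteq> f (vadd x u)))" for x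
    using q z unfolding qprop_def by (metis (full_types))
  have "TT f u = (\<Sum>x\<in>UNIV. sgn2 (f (vadd x z) \<noteq> f (vadd (vadd x z) u)))"
    unfolding TT_def by (rule sum_shift[symmetric])
  also have "\<dots> = - TT f u" unfolding TT_def g sgn2_not by (simp add: sum_negf)
  finally show ?thesis using False by simp
qed

lemma parseval: "(\<Sum>a\<in>UNIV. (wal f a)^2) = 2 ^ CARD('n) * 2 ^ CARD('n)"
  for f :: "('n::finite) vec2 \<Rightarrow> bool"
proof -
  have "(\<Sum>a\<in>UNIV. (wal f a)^2) = (\<Sum>a\<in>UNIV. \<Sum>u\<in>UNIV. sgn2 (dot u a) * TT f u)"
    by (simp add: W2)
  also have "\<dots> = (\<Sum>u\<in>UNIV. \<Sum>a\<in>UNIV. sgn2 (dot u a) * TT f u)" by (rule sum.swap)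
  also have "\<dots> = (\<Sum>u\<in>UNIV. TT f u * (\<Sum>a\<in>UNIV. sgn2 (dot u a)))"
    by (simp add: sum_distrib_left mult.commute)
  also have "\<dots> = (\<Sum>u\<in>UNIV. TT f u * (if u = vzero then 2 ^ CARD('n) else 0))"
    by (simp only: orth)
  also have "\<dots> = TT f vzero * 2 ^ CARD('n)"
    by (simp add: if_distrib[where f="\<lambda>t. TT f _ * t"] cong: if_cong)
  also have "TT f vzero = 2 ^ CARD('n)"
    unfolding TT_def using card_vec_int[where 'n='n] by simp
  finally show ?thesis .
qed

lemma rad_zero: "vzero \<in> rad f" by (simp add: rad_def)
lemma rad_add: assumes "u \<in> rad f" "v \<in> rad f" shows "vadd u v \<in> rad f"
proof -
  have u: "(f x \<noteq> f (vadd x u)) = (f vzero \<noteq> f u)" for x using assms(1) by (simp add: rad_def)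
  have v: "(f x \<noteq> f (vadd x v)) = (f vzero \<noteq> f v)" for x using assms(2) by (simp add: rad_def)
  have "(f x \<noteq> f (vadd x (vadd u v))) = (f vzero \<noteq> f (vadd u v))" for x
    using u[of x] v[of "vadd x u"] u[of vzero] v[of u] by (simp add: vadd_assoc) argo
  then show ?thesis by (simp add: rad_def)
qed

lemma char_sum:
  fixes R :: "('n::finite) vec2 set"
  assumes cl: "\<And>u v. u \<in> R \<Longrightarrow> v \<in> R \<Longrightarrow> vadd u v \<in> R"
    and ph: "\<And>u v. u \<in> R \<Longrightarrow> v \<in> R \<Longrightarrow> \<phi> (vadd u v) = (\<phi> u \<noteq> \<phi> v)"
  shows "(\<Sum>u\<in>R. sgn2 (\<phi> u)) = 0 \<or> (\<Sum>u\<in>R. sgn2 (\<phi> u)) = int (card R)"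
proof (cases "\<exists>z\<in>R. \<phi> z")
  case False
  then show ?thesis by simp
next
  case True
  then obtain z where z: "z \<in> R" "\<phi> z" by blast
  have "(\<Sum>u\<in>R. sgn2 (\<phi> u)) = (\<Sum>u\<in>R. sgn2 (\<phi> (vadd u z)))"
    by (rule sum.reindex_bij_witness[where i="\<lambda>x. vadd x z" and j="\<lambda>x. vadd x z"]) (auto simp: cl z)
  also have "\<dots> = (\<Sum>u\<in>R. - sgn2 (\<phi> u))"
    by (rule sum.cong[OF refl]) (simp add: ph z sgn2_not)
  also have "\<dots> = - (\<Sum>u\<in>R. sgn2 (\<phi> u))" by (simp add: sum_negf)
  finally show ?thesis by simp
qed

lemma wal_sq_vals:
  fixes f :: "('n::finite) vec2 \<Rightarrow> bool"
  assumes q: "qprop f"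
  shows "(wal f a)^2 = 0 \<or> (wal f a)^2 = 2 ^ CARD('n) * int (card (rad f))"
proof -
  define \<phi> where "\<phi> u = (dot u a \<noteq> (f vzero \<noteq> f u))" for u
  have "(wal f a)^2 = (\<Sum>u\<in>UNIV. (if u \<in> rad f then 2 ^ CARD('n) * sgn2 (\<phi> u) else 0))"
    unfolding W2 TT_val[OF q]
    by (rule sum.cong[OF refl]) (auto simp: \<phi>_def sgn2_def)
  also have "\<dots> = (\<Sum>u\<in>rad f. 2 ^ CARD('n) * sgn2 (\<phi> u))"
    using sum.inter_restrict[of "UNIV::'n vec2 set" "\<lambda>u. 2 ^ CARD('n) * sgn2 (\<phi> u)" "rad f"] by simp
  also have "\<dots> = 2 ^ CARD('n) * (\<Sum>u\<in>rad f. sgn2 (\<phi> u))" by (simp add: sum_distrib_left)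
  finally have e: "(wal f a)^2 = 2 ^ CARD('n) * (\<Sum>u\<in>rad f. sgn2 (\<phi> u))" .
  have ph: "\<phi> (vadd u v) = (\<phi> u \<noteq> \<phi> v)" if "u \<in> rad f" "v \<in> rad f" for u v
  proof -
    have "(f u \<noteq> f (vadd u v)) = (f vzero \<noteq> f v)" using that(2) by (simp add: rad_def)
    then show ?thesis unfolding \<phi>_def dot_vadd1 by argo
  qed
  have "(\<Sum>u\<in>rad f. sgn2 (\<phi> u)) = 0 \<or> (\<Sum>u\<in>rad f. sgn2 (\<phi> u)) = int (card (rad f))"
    by (rule char_sum) (simp_all add: rad_add ph)
  then show ?thesis using e by auto
qed

lemma amp_sq:
  fixes f :: "('n::finite) vec2 \<Rightarrow> bool"
  assumes q: "qprop f"
  shows "Max (range (\<lambda>a. \<bar>wal f a\<bar>)) \<ge> 0 \<and>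
         (Max (range (\<lambda>a. \<bar>wal f a\<bar>)))^2 = 2 ^ CARD('n) * int (card (rad f))"
proof -
  let ?K = "2 ^ CARD('n) * int (card (rad f)) :: int"
  let ?A = "Max (range (\<lambda>a. \<bar>wal f a\<bar>))"
  have "card (rad f) > 0" using rad_zero[of f] by (auto simp: card_gt_0_iff)
  then have Kpos: "?K > 0" by simp
  have "\<exists>a. (wal f a)^2 \<noteq> 0"
  proof (rule ccontr)
    assume "\<not> ?thesis"
    then have "(\<Sum>a\<in>UNIV. (wal f a)^2) = 0" by simp
    then show False using parseval[of f] by simp
  qed
  then obtain a1 where a1: "(wal f a1)^2 = ?K" using wal_sq_vals[OF q] by blast
  have "?A \<in> range (\<lambda>a. \<bar>wal f a\<bar>)" by (rule Max_in) auto
  then obtain a0 where a0: "?A = \<bar>wal f a0\<bar>" by blast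
  have ge: "?A \<ge> \<bar>wal f a1\<bar>" by (rule Max_ge) auto
  have "\<bar>wal f a1\<bar>^2 \<le> ?A^2" by (rule power_mono[OF ge]) simp
  then have "?A^2 \<ge> ?K" using a1 by (simp only: power2_abs)
  moreover have "?A^2 = 0 \<or> ?A^2 = ?K" using a0 wal_sq_vals[OF q, of a0] by simp
  ultimately show ?thesis using Kpos a0 by auto
qed



lemma rad_prod:
  fixes f1 f2 :: "('n::finite) vec2 \<Rightarrow> bool"
  assumes "rad f1 \<inter> rad f2 \<subseteq> {vzero}"
  shows "card (rad f1) * card (rad f2) \<le> 2 ^ CARD('n)"
proof -
  have inj: "inj_on (\<lambda>(u,v). vadd u v) (rad f1 \<times> rad f2)"
  proof (rule inj_onI, clarify)
    fix u v u' v'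
    assume h: "u \<in> rad f1" "v \<in> rad f2" "u' \<in> rad f1" "v' \<in> rad f2" "vadd u v = vadd u' v'"
    have e: "vadd u u' = vadd v v'" using h(5) by (auto simp: vadd_def fun_eq_iff)
    have "vadd u u' \<in> rad f1" "vadd v v' \<in> rad f2" using h by (auto intro: rad_add)
    then have "vadd u u' = vzero" "vadd v v' = vzero" using e assms by auto
    then show "u = u' \<and> v = v'" by (simp add: vadd_eq_zero)
  qed
  have "card (rad f1) * card (rad f2) = card (rad f1 \<times> rad f2)" by (simp add: card_cartesian_product)
  also have "\<dots> = card ((\<lambda>(u,v). vadd u v) ` (rad f1 \<times> rad f2))" using inj by (simp add: card_image)
  also have "\<dots> \<le> card (UNIV :: 'n vec2 set)" by (rule card_mono) auto
  finally show ?thesis by (simp add: card_vec)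
qed

lemma orth': "(\<Sum>b\<in>UNIV. sgn2 (dot b (z::('n::finite) vec2))) = (if z = vzero then 2 ^ CARD('n) else 0)"
  unfolding dot_comm[of _ z] by (rule orth)

lemma apn_rad:
  fixes F :: "('n::finite) vec2 \<Rightarrow> 'n vec2"
  assumes apn: "APN F" and u: "u \<noteq> vzero" and bb: "b1 \<noteq> b2" "b1 \<noteq> vzero" "b2 \<noteq> vzero"
    and r1: "u \<in> rad (component F b1)" and r2: "u \<in> rad (component F b2)"
  shows False
proof -
  define D where "D x = vadd (F x) (F (vadd x u))" for x
  define N :: int where "N = 2 ^ CARD('n)"
  have cD: "(component F b x \<noteq> component F b (vadd x u)) = dot b (D x)" for b x
    by (simp add: component_def D_def dot_vadd)
  define S where "S b = (\<Sum>x\<in>UNIV. sgn2 (dot b (D x)))" for b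
  have inB: "(S b)^2 = N * N" if "u \<in> rad (component F b)" for b
  proof -
    have c: "dot b (D x) = dot b (D vzero)" for x
      using that cD[of b x] cD[of b vzero] unfolding rad_def by simp
    have "S b = (\<Sum>x\<in>(UNIV::'n vec2 set). sgn2 (dot b (D vzero)))" unfolding S_def by (intro sum.cong refl arg_cong[where f=sgn2] c)
    also have "\<dots> = int (card (UNIV::'n vec2 set)) * sgn2 (dot b (D vzero))" by simp
    finally have "S b = N * sgn2 (dot b (D vzero))" by (simp only: card_vec_int N_def)
    then show ?thesis by (simp add: power2_eq_square sgn2_def)
  qed
  have r0: "u \<in> rad (component F vzero)" by (simp add: rad_def component_def)
  have lower: "3 * (N * N) \<le> (\<Sum>b\<in>UNIV. (S b)^2)"
  proof -
    have "(\<Sum>b\<in>{vzero, b1, b2}. (S b)^2) = 3 * (N * N)"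
      using bb inB[OF r0] inB[OF r1] inB[OF r2] by simp
    moreover have "(\<Sum>b\<in>{vzero, b1, b2}. (S b)^2) \<le> (\<Sum>b\<in>UNIV. (S b)^2)"
      by (rule sum_mono2) auto
    ultimately show ?thesis by simp
  qed
  have "(\<Sum>b\<in>UNIV. (S b)^2) = (\<Sum>b\<in>UNIV. \<Sum>x\<in>UNIV. \<Sum>y\<in>UNIV. sgn2 (dot b (D x)) * sgn2 (dot b (D y)))"
    unfolding S_def power2_eq_square by (rule sum.cong[OF refl], rule sum_product)
  also have "\<dots> = (\<Sum>x\<in>UNIV. \<Sum>b\<in>UNIV. \<Sum>y\<in>UNIV. sgn2 (dot b (D x)) * sgn2 (dot b (D y)))"
    by (rule sum.swap)
  also have "\<dots> = (\<Sum>x\<in>UNIV. \<Sum>y\<in>UNIV. \<Sum>b\<in>UNIV. sgn2 (dot b (D x)) * sgn2 (dot b (D y)))"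
    by (rule sum.cong[OF refl], rule sum.swap)
  also have "\<dots> = (\<Sum>x\<in>UNIV. \<Sum>y\<in>UNIV. \<Sum>b\<in>UNIV. sgn2 (dot b (vadd (D x) (D y))))"
    by (rule sum.cong[OF refl])+ (auto simp: dot_vadd sgn2_def)
  also have "\<dots> = (\<Sum>x\<in>UNIV. \<Sum>y\<in>UNIV. (if D y = D x then N else 0))"
    by (rule sum.cong[OF refl])+ (auto simp: orth' vadd_eq_zero N_def)
  also have "\<dots> = (\<Sum>x\<in>UNIV. N * int (card {y. D y = D x}))"
  proof (rule sum.cong[OF refl])
    fix x
    show "(\<Sum>y\<in>UNIV. (if D y = D x then N else 0)) = N * int (card {y. D y = D x})"
      using sum.inter_filter[of "UNIV::'n vec2 set" "\<lambda>_. N" "\<lambda>y. D y = D x"] by (simp add: mult.commute)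
  qed
  finally have eq1: "(\<Sum>b\<in>UNIV. (S b)^2) = (\<Sum>x\<in>UNIV. N * int (card {y. D y = D x}))" .
  have le1: "(\<Sum>x\<in>UNIV. N * int (card {y. D y = D x})) \<le> (\<Sum>x\<in>(UNIV::'n vec2 set). N * 2)"
  proof (rule sum_mono)
    fix x
    have "card {y. D y = D x} \<le> 2" using apn u unfolding APN_def D_def by blast
    then show "N * int (card {y. D y = D x}) \<le> N * 2" by (simp add: N_def)
  qed
  have eq2: "(\<Sum>x\<in>(UNIV::'n vec2 set). N * 2) = 2 * (N * N)" by (simp add: card_vec_int N_def)
  have "(\<Sum>b\<in>UNIV. (S b)^2) \<le> 2 * (N * N)" using eq1 le1 eq2 by linarith
  moreover have "N * N > 0" by (simp add: N_def)
  ultimately show False using lower by simp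
qed



lemma amp_eq: "amplitude F b = Max (range (\<lambda>a. \<bar>wal (component F b) a\<bar>))"
proof -
  have "{\<bar>walsh F b a\<bar> | a. True} = range (\<lambda>a. \<bar>wal (component F b) a\<bar>)"
    by (auto simp: walsh_def wal_def)
  then show ?thesis by (simp add: amplitude_def)
qed

lemma amp_facts:
  fixes F :: "('n::finite) vec2 \<Rightarrow> ('m::finite) vec2"
  assumes "quadratic F"
  shows "amplitude F b \<ge> 0 \<and> (amplitude F b)^2 = 2 ^ CARD('n) * int (card (rad (component F b)))"
proof -
  have "qprop (component F b)" using assms quad_qprop unfolding quadratic_def by blast
  then show ?thesis unfolding amp_eq by (rule amp_sq)
qed

lemma sq_powr: "(2 powr (x::real))^2 = 2 powr (2 * x)"
  by (simp add: power2_eq_square powr_add[symmetric])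

lemma pw: "2 powr (real m) = (2::real) ^ m" by (simp add: powr_realpow)

theorem mainTheorem6:
  fixes F :: "('n::finite) vec2 \<Rightarrow> 'n vec2"
  assumes "even CARD('n)"
    and "quadratic F"
    and "APN F"
  shows "(\<forall>l::nat. real l > real CARD('n) / 2 \<and>
            real_of_int (linearity F) = 2 powr ((real CARD('n) + real l) / 2) \<longrightarrow>
            (\<exists>!b. b \<noteq> vzero \<and> real_of_int (amplitude F b) = 2 powr ((real CARD('n) + real l) / 2)) \<and>
            (\<forall>b. b \<noteq> vzero \<and> real_of_int (amplitude F b) \<noteq> 2 powr ((real CARD('n) + real l) / 2) \<longrightarrow>
                 real_of_int (amplitude F b) \<le> 2 powr ((2 * real CARD('n) - real l) / 2)))
       \<and> card {b. b \<noteq> vzero \<and> real_of_int (amplitude F b) > 2 powr (3 * real CARD('n) / 4)} \<le> 1"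
proof -
  let ?n = "CARD('n)"
  define k where "k b = card (rad (component F b))" for b
  have A: "amplitude F b \<ge> 0" "(amplitude F b)^2 = 2 ^ ?n * int (k b)" for b
    using amp_facts[OF assms(2), of b] by (auto simp: k_def)
  have AR: "(real_of_int (amplitude F b))^2 = 2 ^ ?n * real (k b)" for b
  proof -
    have "real_of_int ((amplitude F b)^2) = real_of_int (2 ^ ?n * int (k b))" using A(2)[of b] by simp
    then show ?thesis by simp
  qed
  have P: "k b1 * k b2 \<le> 2 ^ ?n" if "b1 \<noteq> b2" "b1 \<noteq> vzero" "b2 \<noteq> vzero" for b1 b2
    unfolding k_def
  proof (rule rad_prod, rule subsetI)
    fix u assume "u \<in> rad (component F b1) \<inter> rad (component F b2)"
    then show "u \<in> {vzero}" using apn_rad[OF assms(3) _ that] by blast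
  qed
  have PR: "real (k b1) * real (k b2) \<le> 2 ^ ?n" if "b1 \<noteq> b2" "b1 \<noteq> vzero" "b2 \<noteq> vzero" for b1 b2
  proof -
    have "real (k b1 * k b2) \<le> real (2 ^ ?n)" using P[OF that] by linarith
    then show ?thesis by simp
  qed
  have part2: "card {b. b \<noteq> vzero \<and> real_of_int (amplitude F b) > 2 powr (3 * real ?n / 4)} \<le> 1"
  proof -
    let ?P = "2 powr (3 * real ?n / 4) :: real"
    have "b1 = b2" if h1: "b1 \<noteq> vzero" "real_of_int (amplitude F b1) > ?P"
      and h2: "b2 \<noteq> vzero" "real_of_int (amplitude F b2) > ?P" for b1 b2
    proof (rule ccontr)
      assume ne: "b1 \<noteq> b2"
      have Pp: "?P > 0" by simp
      have s1: "(real_of_int (amplitude F b1))^2 > ?P^2"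
        using h1(2) Pp by (intro power_strict_mono) auto
      have s2: "(real_of_int (amplitude F b2))^2 > ?P^2"
        using h2(2) Pp by (intro power_strict_mono) auto
      have "(real_of_int (amplitude F b1))^2 * (real_of_int (amplitude F b2))^2 > ?P^2 * ?P^2"
        using s1 s2 Pp by (intro mult_strict_mono) auto
      moreover have "?P^2 * ?P^2 = 2 ^ (3 * ?n)"
      proof -
        have "?P^2 * ?P^2 = 2 powr (2 * (3 * real ?n / 4) + 2 * (3 * real ?n / 4))"
          by (simp add: sq_powr powr_add[symmetric])
        also have "\<dots> = 2 powr (real (3 * ?n))" by simp
        finally show ?thesis using pw[of "3 * ?n"] by simp
      qed
      moreover have "(real_of_int (amplitude F b1))^2 * (real_of_int (amplitude F b2))^2 \<le> 2 ^ (3 * ?n)"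
      proof -
        have "(real_of_int (amplitude F b1))^2 * (real_of_int (amplitude F b2))^2
            = 2 ^ ?n * 2 ^ ?n * (real (k b1) * real (k b2))" by (simp add: AR)
        also have "\<dots> \<le> 2 ^ ?n * 2 ^ ?n * 2 ^ ?n" using PR[OF ne h1(1) h2(1)] by simp
        also have "\<dots> = 2 ^ (3 * ?n)" by (simp add: power_add[symmetric])
        finally show ?thesis .
      qed
      ultimately show False by simp
    qed
    then have "\<forall>x\<in>{b. b \<noteq> vzero \<and> real_of_int (amplitude F b) > ?P}. \<forall>y\<in>{b. b \<noteq> vzero \<and> real_of_int (amplitude F b) > ?P}. x = y"
      by blast
    then have "card {b. b \<noteq> vzero \<and> real_of_int (amplitude F b) > ?P} \<le> Suc 0"
      using card_le_Suc0_iff_eq[of "{b. b \<noteq> vzero \<and> real_of_int (amplitude F b) > ?P}"] by simp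
    then show ?thesis by simp
  qed
  have part1: "(\<exists>!b. b \<noteq> vzero \<and> real_of_int (amplitude F b) = 2 powr ((real ?n + real l) / 2)) \<and>
            (\<forall>b. b \<noteq> vzero \<and> real_of_int (amplitude F b) \<noteq> 2 powr ((real ?n + real l) / 2) \<longrightarrow>
                 real_of_int (amplitude F b) \<le> 2 powr ((2 * real ?n - real l) / 2))"
    if hl: "real l > real ?n / 2" and hL: "real_of_int (linearity F) = 2 powr ((real ?n + real l) / 2)" for l :: nat
  proof -
    let ?L = "2 powr ((real ?n + real l) / 2) :: real"
    let ?S = "{\<bar>walsh F b a\<bar> | a b. b \<noteq> vzero}"
    have fin: "finite ?S"
    proof -
      have "?S \<subseteq> (\<lambda>(a,b). \<bar>walsh F b a\<bar>) ` UNIV" by auto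
      then show ?thesis by (rule finite_subset) simp
    qed
    have ex1: "(\<lambda>_. True) \<noteq> (vzero :: 'n vec2)" by (auto simp: vzero_def fun_eq_iff)
    then have ne: "?S \<noteq> {}" by blast
    have "linearity F \<in> ?S" unfolding linearity_def using fin ne by (rule Max_in)
    then obtain a0 b0 where b0: "b0 \<noteq> vzero" and lin: "linearity F = \<bar>walsh F b0 a0\<bar>" by blast
    have amp0: "amplitude F b0 = linearity F"
    proof (rule antisym)
      have "amplitude F b0 \<in> range (\<lambda>a. \<bar>wal (component F b0) a\<bar>)" unfolding amp_eq by (rule Max_in) auto
      then obtain a1 where "amplitude F b0 = \<bar>walsh F b0 a1\<bar>" by (auto simp: walsh_def wal_def)
      then show "amplitude F b0 \<le> linearity F"
        unfolding linearity_def using fin b0 by (auto intro!: Max_ge)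
      show "linearity F \<le> amplitude F b0" unfolding lin amp_eq
        by (rule Max_ge) (auto simp: walsh_def wal_def)
    qed
    have L2: "?L^2 = 2 ^ (?n + l)"
    proof -
      have "?L^2 = 2 powr (2 * ((real ?n + real l) / 2))" by (rule sq_powr)
      also have "\<dots> = 2 powr (real (?n + l))" by (rule arg_cong[where f="\<lambda>t. 2 powr t"]) simp
      finally show ?thesis by (simp only: pw)
    qed
    have k0: "real (k b0) = 2 ^ l"
    proof -
      have "2 ^ ?n * real (k b0) = 2 ^ ?n * 2 ^ l" using AR[of b0] amp0 hL L2 by (simp add: power_add)
      then show ?thesis by simp
    qed
    have other: "real (k b) * 2 ^ l \<le> 2 ^ ?n" if "b \<noteq> vzero" "b \<noteq> b0" for b
      using PR[OF that(2) that(1) b0] k0 by simp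
    have uniq: "b = b0" if "b \<noteq> vzero" "real_of_int (amplitude F b) = ?L" for b
    proof (rule ccontr)
      assume nb: "b \<noteq> b0"
      have "real (k b) = 2 ^ l"
      proof -
        have "2 ^ ?n * real (k b) = ?L^2" using AR[of b] that(2) by metis
        also have "\<dots> = 2 ^ ?n * 2 ^ l" using L2 by (simp only: power_add)
        finally have "2 ^ ?n * real (k b) = 2 ^ ?n * 2 ^ l" .
        then show ?thesis by simp
      qed
      then have "(2::real) ^ l * 2 ^ l \<le> 2 ^ ?n" using other[OF that(1) nb] by simp
      then have "(2::real) ^ (l + l) \<le> 2 ^ ?n" by (simp add: power_add)
      then have "l + l \<le> ?n" by simp
      then show False using hl by linarith
    qed
    show ?thesis
    proof (intro conjI allI impI)
      show "\<exists>!b. b \<noteq> vzero \<and> real_of_int (amplitude F b) = ?L"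
      proof (rule ex1I[of _ b0])
        show "b0 \<noteq> vzero \<and> real_of_int (amplitude F b0) = ?L" using b0 amp0 hL by simp
      next
        fix b assume "b \<noteq> vzero \<and> real_of_int (amplitude F b) = ?L"
        then show "b = b0" using uniq by blast
      qed
    next
      fix b assume hb: "b \<noteq> vzero \<and> real_of_int (amplitude F b) \<noteq> ?L"
      then have nb: "b \<noteq> b0" using amp0 hL by metis
      let ?R = "2 powr ((2 * real ?n - real l) / 2) :: real"
      have R2: "?R^2 * 2 ^ l = 2 ^ (2 * ?n)"
      proof -
        have "?R^2 * 2 ^ l = 2 powr (2 * ((2 * real ?n - real l) / 2)) * 2 powr (real l)"
          by (simp only: sq_powr pw)
        also have "\<dots> = 2 powr (2 * ((2 * real ?n - real l) / 2) + real l)"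
          by (simp only: powr_add)
        also have "\<dots> = 2 powr (real (2 * ?n))" by (rule arg_cong[where f="\<lambda>t. 2 powr t"]) (simp add: field_simps)
        finally show ?thesis using pw[of "2 * ?n"] by simp
      qed
      have "(real_of_int (amplitude F b))^2 * 2 ^ l = 2 ^ ?n * (real (k b) * 2 ^ l)"
        by (simp add: AR)
      also have "\<dots> \<le> 2 ^ ?n * 2 ^ ?n" using other[OF _ nb] hb by simp
      also have "\<dots> = ?R^2 * 2 ^ l" using R2 by (metis mult_2 power_add)
      finally have "(real_of_int (amplitude F b))^2 \<le> ?R^2" by simp
      then show "real_of_int (amplitude F b) \<le> ?R"
        by (rule power2_le_imp_le) simp
    qed
  qed
  show ?thesis using part1 part2 by blast
qed


end
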